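(* Let $n$ be an odd positive integer. Then there exists a $(4n+2)\times(4n+2)$ matrix $B$, all of whose entries lie in $\{0,1\}$, which has two distinct eigenvalues $\lambda\neq\mu$ with $|\lambda-\mu|\le 2^{-\frac{(n+3)(n-3)}{4}}$. Moreover, $\lambda$ and $\mu$ are both roots of a single factor of the characteristic polynomial $\chi(B)$ which is irreducible over $\mathbb{Z}$ and has degree $2n+2$.
   Context: $\chi(B)=\det(tI-B)$ denotes the characteristic polynomial of $B$, a monic polynomial with integer coefficients. *)

theory Defs
  imports Complex_Main "Jordan_Normal_Form.Char_Poly"
begin

end

theory Submission
  imports Defs "Berlekamp_Zassenhaus.Factor_Bound"
begin


definition succs :: "nat \<Rightarrow> nat \<Rightarrow> nat set" where
  "succs m x =
    (if x < 2*m then {x+1}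
     else if x = 2*m then {2*m+1, 3*m+1, 4*m+1}
     else if x < 3*m then {x+1, x+m+1}
     else if x = 3*m then {5*m+2, 5*m+3}
     else if x < 4*m then {x+1, x+1-m}
     else if x = 4*m then {5*m+2, 5*m+3}
     else if x \<le> 5*m then {x+1}
     else if x = 5*m+1 then {5*m+2, 5*m+3}
     else if x \<le> 5*m+3 then {5*m+4, 6*m+4, 7*m+4}
     else if x < 6*m+3 then {x+1, x+m+1}
     else if x = 6*m+3 then {0}
     else if x < 7*m+3 then {x+1, x+1-m}
     else if x = 7*m+3 then {0}
     else if x < 8*m+4 then {x+1}
     else if x = 8*m+4 then {0}
     else {})"

definition V2 :: "nat \<Rightarrow> complex \<Rightarrow> complex" where
  "V2 m z = 2^m * inverse z^(m+1) + inverse z^(m+2)"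

definition vals :: "nat \<Rightarrow> complex \<Rightarrow> nat \<Rightarrow> complex" where
  "vals m z x =
    (if x = 0 then 1
     else if x \<le> 2*m then inverse z^(2*m-x) * (2 * V2 m z^2)
     else if x \<le> 3*m then 2^(3*m-x+1) * inverse z^(3*m-x+1) * V2 m z
     else if x \<le> 4*m then 2^(4*m-x+1) * inverse z^(4*m-x+1) * V2 m z
     else if x \<le> 5*m+1 then 2 * inverse z^(5*m+2-x) * V2 m z
     else if x \<le> 5*m+3 then V2 m z
     else if x \<le> 6*m+3 then 2^(6*m+3-x) * inverse z^(6*m+3-x+1)
     else if x \<le> 7*m+3 then 2^(7*m+3-x) * inverse z^(7*m+3-x+1)
     else if x \<le> 8*m+4 then inverse z^(8*m+5-x)
     else 0)"

lemma zinv: "z \<noteq> 0 \<Longrightarrow> z * inverse z ^ Suc e = (inverse z ^ e :: complex)"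
  by (simp add: field_simps)

lemma succs_sub: "m \<ge> 1 \<Longrightarrow> x < 8*m+6 \<Longrightarrow> succs m x \<subseteq> {..<8*m+6}"
  unfolding succs_def by auto

lemma case_S: assumes "m \<ge> 1" "z \<noteq> 0" "1 \<le> x" "x < 2*m"
  shows "(\<Sum>y\<in>succs m x. vals m z y) = z * vals m z x"
proof -
  have "succs m x = {x+1}" using assms by (simp add: succs_def)
  moreover have "2*m - x = Suc (2*m - (x+1))" using assms by simp
  ultimately show ?thesis using assms by (simp add: vals_def zinv mult.assoc[symmetric])
qed


lemma zmul: "z \<noteq> 0 \<Longrightarrow> z * (c * inverse z ^ Suc e * V) = c * inverse z ^ e * (V::complex)"
proof -
  assume z: "z \<noteq> 0"
  have "z * (c * inverse z ^ Suc e * V) = c * (z * inverse z ^ Suc e) * V" by (simp only: mult_ac)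
  also have "\<dots> = c * inverse z ^ e * V" using zinv[OF z] by simp
  finally show ?thesis .
qed

lemma zmul2: "(z::complex) \<noteq> 0 \<Longrightarrow> z * (c * inverse z ^ Suc e) = c * inverse z ^ e"
proof -
  assume z: "z \<noteq> 0"
  have "z * (c * inverse z ^ Suc e) = c * (z * inverse z ^ Suc e)" by (rule mult.left_commute)
  also have "\<dots> = c * inverse z ^ e" using zinv[OF z] by simp
  finally show ?thesis .
qed

lemma V2_alt: "V2 m z = inverse z * (2^m * inverse z^m + inverse z^(m+1))"
  unfolding V2_def by (simp add: algebra_simps)

lemma zV2: "z \<noteq> 0 \<Longrightarrow> z * V2 m z = 2^m * inverse z^m + inverse z^(m+1)"
  unfolding V2_alt by (simp add: mult.assoc[symmetric])



lemma vals_S: "1 \<le> y \<Longrightarrow> y \<le> 2*m \<Longrightarrow> vals m z y = inverse z^(2*m-y) * (2 * V2 m z^2)"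
  by (simp add: vals_def)
lemma vals_LA: "2*m < y \<Longrightarrow> y \<le> 3*m \<Longrightarrow> vals m z y = 2^(3*m-y+1) * inverse z^(3*m-y+1) * V2 m z"
  by (simp add: vals_def)
lemma vals_LB: "3*m < y \<Longrightarrow> y \<le> 4*m \<Longrightarrow> vals m z y = 2^(4*m-y+1) * inverse z^(4*m-y+1) * V2 m z"
  by (simp add: vals_def)
lemma vals_r: "4*m < y \<Longrightarrow> y \<le> 5*m+1 \<Longrightarrow> vals m z y = 2 * inverse z^(5*m+2-y) * V2 m z"
  by (simp add: vals_def)
lemma vals_J2: "5*m+1 < y \<Longrightarrow> y \<le> 5*m+3 \<Longrightarrow> vals m z y = V2 m z"
  by (simp add: vals_def)
lemma vals_LpA: "5*m+3 < y \<Longrightarrow> y \<le> 6*m+3 \<Longrightarrow> vals m z y = 2^(6*m+3-y) * inverse z^(6*m+3-y+1)"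
  by (simp add: vals_def)
lemma vals_LpB: "6*m+3 < y \<Longrightarrow> y \<le> 7*m+3 \<Longrightarrow> vals m z y = 2^(7*m+3-y) * inverse z^(7*m+3-y+1)"
  by (simp add: vals_def)
lemma vals_rp: "7*m+3 < y \<Longrightarrow> y \<le> 8*m+4 \<Longrightarrow> vals m z y = inverse z^(8*m+5-y)"
  by (simp add: vals_def)
lemma vals_out: "8*m+4 < y \<Longrightarrow> vals m z y = 0"
  by (simp add: vals_def)

lemma case_J1: assumes "m \<ge> 1" "z \<noteq> 0"
  shows "(\<Sum>y\<in>succs m (2*m). vals m z y) = z * vals m z (2*m)"
proof -
  have s: "succs m (2*m) = {2*m+1, 3*m+1, 4*m+1}" using assms by (simp add: succs_def)
  have e1: "3*m - (2*m+1) + 1 = m" "4*m - (3*m+1) + 1 = m" "5*m+2-(4*m+1) = m+1" using assms by auto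
  have "vals m z (2*m+1) = 2^(3*m - (2*m+1) + 1) * inverse z^(3*m - (2*m+1) + 1) * V2 m z" using assms by (intro vals_LA) auto
  hence A: "vals m z (2*m+1) = 2^m * inverse z^m * V2 m z" by (simp only: e1)
  have "vals m z (3*m+1) = 2^(4*m - (3*m+1) + 1) * inverse z^(4*m - (3*m+1) + 1) * V2 m z" using assms by (intro vals_LB) auto
  hence B: "vals m z (3*m+1) = 2^m * inverse z^m * V2 m z" by (simp only: e1)
  have "vals m z (4*m+1) = 2 * inverse z^(5*m+2-(4*m+1)) * V2 m z" using assms by (intro vals_r) auto
  hence C: "vals m z (4*m+1) = 2 * inverse z^(m+1) * V2 m z" by (simp only: e1)
  have "(\<Sum>y\<in>succs m (2*m). vals m z y) = vals m z (2*m+1) + vals m z (3*m+1) + vals m z (4*m+1)"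
    using assms by (simp add: s)
  also have "\<dots> = 2^m * inverse z^m * V2 m z + 2^m * inverse z^m * V2 m z + 2 * inverse z^(m+1) * V2 m z"
    by (simp only: A B C)
  also have "\<dots> = 2 * V2 m z * (2^m * inverse z^m + inverse z^(m+1))" by (simp add: algebra_simps)
  also have "\<dots> = 2 * V2 m z * (z * V2 m z)" by (simp only: zV2[OF assms(2)])
  also have "\<dots> = z * (2 * V2 m z ^ 2)" by (simp add: power2_eq_square)
  also have "\<dots> = z * vals m z (2*m)" using assms by (simp add: vals_S)
  finally show ?thesis .
qed

lemma case_LA: assumes "m \<ge> 1" "z \<noteq> 0" "2*m < x" "x < 3*m"
  shows "(\<Sum>y\<in>succs m x. vals m z y) = z * vals m z x"
proof -
  define e where "e = 3*m - x - 1"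
  have s: "succs m x = {x+1, x+m+1}" using assms by (simp add: succs_def)
  have e1: "3*m - (x+1) + 1 = Suc e" "4*m - (x+m+1) + 1 = Suc e" "3*m - x + 1 = Suc (Suc e)" using assms by (auto simp: e_def)
  have "vals m z (x+1) = 2^(3*m - (x+1) + 1) * inverse z^(3*m - (x+1) + 1) * V2 m z" using assms by (intro vals_LA) auto
  hence A: "vals m z (x+1) = 2^Suc e * inverse z^Suc e * V2 m z" by (simp only: e1)
  have "vals m z (x+m+1) = 2^(4*m - (x+m+1) + 1) * inverse z^(4*m - (x+m+1) + 1) * V2 m z" using assms by (intro vals_LB) auto
  hence B: "vals m z (x+m+1) = 2^Suc e * inverse z^Suc e * V2 m z" by (simp only: e1)
  have "vals m z x = 2^(3*m - x + 1) * inverse z^(3*m - x + 1) * V2 m z" using assms by (intro vals_LA) auto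
  hence C: "vals m z x = 2^Suc (Suc e) * inverse z^Suc (Suc e) * V2 m z" by (simp only: e1)
  have "(\<Sum>y\<in>succs m x. vals m z y) = vals m z (x+1) + vals m z (x+m+1)"
    using assms by (simp add: s)
  also have "\<dots> = 2^Suc e * inverse z^Suc e * V2 m z + 2^Suc e * inverse z^Suc e * V2 m z"
    by (simp only: A B)
  also have "\<dots> = z * (2^(Suc (Suc e)) * inverse z^(Suc (Suc e)) * V2 m z)" by (simp only: zmul[OF assms(2)]) simp
  also have "\<dots> = z * vals m z x" by (simp only: C)
  finally show ?thesis .
qed


lemma case_LB: assumes "m \<ge> 1" "z \<noteq> 0" "3*m < x" "x < 4*m"
  shows "(\<Sum>y\<in>succs m x. vals m z y) = z * vals m z x"
proof -
  define e where "e = 4*m - x - 1"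
  have s: "succs m x = {x+1, x+1-m}" using assms by (simp add: succs_def)
  have e1: "4*m - (x+1) + 1 = Suc e" "3*m - (x+1-m) + 1 = Suc e" "4*m - x + 1 = Suc (Suc e)" using assms by (auto simp: e_def)
  have "vals m z (x+1) = 2^(4*m - (x+1) + 1) * inverse z^(4*m - (x+1) + 1) * V2 m z" using assms by (intro vals_LB) auto
  hence A: "vals m z (x+1) = 2^Suc e * inverse z^Suc e * V2 m z" by (simp only: e1)
  have "vals m z (x+1-m) = 2^(3*m - (x+1-m) + 1) * inverse z^(3*m - (x+1-m) + 1) * V2 m z" using assms by (intro vals_LA) auto
  hence B: "vals m z (x+1-m) = 2^Suc e * inverse z^Suc e * V2 m z" by (simp only: e1)
  have "vals m z x = 2^(4*m - x + 1) * inverse z^(4*m - x + 1) * V2 m z" using assms by (intro vals_LB) auto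
  hence C: "vals m z x = 2^Suc (Suc e) * inverse z^Suc (Suc e) * V2 m z" by (simp only: e1)
  have d: "x+1 \<noteq> x+1-m" using assms by auto
  have "(\<Sum>y\<in>succs m x. vals m z y) = vals m z (x+1) + vals m z (x+1-m)"
    using d by (simp add: s)
  also have "\<dots> = 2^Suc e * inverse z^Suc e * V2 m z + 2^Suc e * inverse z^Suc e * V2 m z"
    by (simp only: A B)
  also have "\<dots> = z * (2^(Suc (Suc e)) * inverse z^(Suc (Suc e)) * V2 m z)" by (simp only: zmul[OF assms(2)]) simp
  also have "\<dots> = z * vals m z x" by (simp only: C)
  finally show ?thesis .
qed

lemma case_Lend: assumes "m \<ge> 1" "z \<noteq> 0" "x = 3*m \<or> x = 4*m \<or> x = 5*m+1"
  shows "(\<Sum>y\<in>succs m x. vals m z y) = z * vals m z x"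
proof -
  have s: "succs m x = {5*m+2, 5*m+3}" using assms by (auto simp add: succs_def)
  have A1: "vals m z (5*m+2) = V2 m z" by (rule vals_J2) simp_all
  have A2: "vals m z (5*m+3) = V2 m z" by (rule vals_J2) simp_all
  note A = A1 A2
  have C: "vals m z x = 2 * inverse z ^ Suc 0 * V2 m z"
    using assms(3)
  proof (elim disjE)
    assume "x = 3*m" thus ?thesis using vals_LA[of m x z] assms by simp
  next
    assume "x = 4*m" thus ?thesis using vals_LB[of m x z] assms by simp
  next
    assume "x = 5*m+1" thus ?thesis using vals_r[of m x z] assms by simp
  qed
  have "(\<Sum>y\<in>succs m x. vals m z y) = vals m z (5*m+2) + vals m z (5*m+3)"
    by (simp add: s)
  also have "\<dots> = 2 * V2 m z" by (simp only: A) simp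
  also have "\<dots> = z * (2 * inverse z ^ Suc 0 * V2 m z)" by (simp only: zmul[OF assms(2)]) simp
  also have "\<dots> = z * vals m z x" by (simp only: C)
  finally show ?thesis .
qed

lemma case_r: assumes "m \<ge> 1" "z \<noteq> 0" "4*m < x" "x \<le> 5*m"
  shows "(\<Sum>y\<in>succs m x. vals m z y) = z * vals m z x"
proof -
  define e where "e = 5*m + 1 - x"
  have s: "succs m x = {x+1}" using assms by (simp add: succs_def)
  have e1: "5*m+2 - (x+1) = e" "5*m+2-x = Suc e" using assms by (auto simp: e_def)
  have "vals m z (x+1) = 2 * inverse z^(5*m+2-(x+1)) * V2 m z" using assms by (intro vals_r) auto
  hence A: "vals m z (x+1) = 2 * inverse z^e * V2 m z" by (simp only: e1)
  have "vals m z x = 2 * inverse z^(5*m+2-x) * V2 m z" using assms by (intro vals_r) auto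
  hence C: "vals m z x = 2 * inverse z^Suc e * V2 m z" by (simp only: e1)
  have "(\<Sum>y\<in>succs m x. vals m z y) = vals m z (x+1)" by (simp add: s)
  also have "\<dots> = 2 * inverse z ^ e * V2 m z" by (simp only: A)
  also have "\<dots> = z * (2 * inverse z ^ Suc e * V2 m z)" by (simp only: zmul[OF assms(2)])
  also have "\<dots> = z * vals m z x" by (simp only: C)
  finally show ?thesis .
qed

lemma case_J2: assumes "m \<ge> 1" "z \<noteq> 0" "x = 5*m+2 \<or> x = 5*m+3"
  shows "(\<Sum>y\<in>succs m x. vals m z y) = z * vals m z x"
proof -
  have s: "succs m x = {5*m+4, 6*m+4, 7*m+4}" using assms by (auto simp add: succs_def)
  obtain k where k: "m = Suc k" using assms by (cases m) auto
  have e1: "6*m+3 - (5*m+4) = k" "7*m+3 - (6*m+4) = k" "6*m+3 - (5*m+4) + 1 = m" "7*m+3 - (6*m+4) + 1 = m"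
     "8*m+5-(7*m+4) = m+1" using k by auto
  have "vals m z (5*m+4) = 2^(6*m+3-(5*m+4)) * inverse z^(6*m+3-(5*m+4)+1)" using assms by (intro vals_LpA) auto
  hence A: "vals m z (5*m+4) = 2^k * inverse z^m" by (simp only: e1) (simp add: k)
  have "vals m z (6*m+4) = 2^(7*m+3-(6*m+4)) * inverse z^(7*m+3-(6*m+4)+1)" using assms by (intro vals_LpB) auto
  hence B: "vals m z (6*m+4) = 2^k * inverse z^m" by (simp only: e1) (simp add: k)
  have "vals m z (7*m+4) = inverse z^(8*m+5-(7*m+4))" using assms by (intro vals_rp) auto
  hence C: "vals m z (7*m+4) = inverse z^(m+1)" by (simp only: e1)
  have D: "vals m z x = V2 m z" using assms by (intro vals_J2) auto
  have d: "5*m+4 \<noteq> 6*m+4" "5*m+4 \<noteq> 7*m+4" "6*m+4 \<noteq> 7*m+4" using assms by auto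
  have "(\<Sum>y\<in>succs m x. vals m z y) = vals m z (5*m+4) + vals m z (6*m+4) + vals m z (7*m+4)"
    using d by (simp add: s)
  also have "\<dots> = 2^k * inverse z^m + 2^k * inverse z^m + inverse z^(m+1)"
    by (simp only: A B C)
  also have "\<dots> = 2^m * inverse z^m + inverse z^(m+1)" by (simp add: k)
  also have "\<dots> = z * vals m z x" by (simp only: D zV2[OF assms(2)])
  finally show ?thesis .
qed

lemma case_LpA: assumes "m \<ge> 1" "z \<noteq> 0" "5*m+3 < x" "x < 6*m+3"
  shows "(\<Sum>y\<in>succs m x. vals m z y) = z * vals m z x"
proof -
  define e where "e = 6*m+3 - x - 1"
  have s: "succs m x = {x+1, x+m+1}" using assms by (simp add: succs_def)
  have e1: "6*m+3 - (x+1) = e" "6*m+3 - (x+1) + 1 = Suc e" "7*m+3 - (x+m+1) = e" "7*m+3 - (x+m+1) + 1 = Suc e"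
     "6*m+3 - x = Suc e" "6*m+3 - x + 1 = Suc (Suc e)" using assms by (auto simp: e_def)
  have "vals m z (x+1) = 2^(6*m+3 - (x+1)) * inverse z^(6*m+3 - (x+1) + 1)" using assms by (intro vals_LpA) auto
  hence A: "vals m z (x+1) = 2^e * inverse z^Suc e" by (simp only: e1 Suc_eq_plus1)
  have "vals m z (x+m+1) = 2^(7*m+3 - (x+m+1)) * inverse z^(7*m+3 - (x+m+1) + 1)" using assms by (intro vals_LpB) auto
  hence B: "vals m z (x+m+1) = 2^e * inverse z^Suc e" by (simp only: e1 Suc_eq_plus1)
  have "vals m z x = 2^(6*m+3 - x) * inverse z^(6*m+3 - x + 1)" using assms by (intro vals_LpA) auto
  hence C: "vals m z x = 2^Suc e * inverse z^Suc (Suc e)" by (simp only: e1 Suc_eq_plus1)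
  have "(\<Sum>y\<in>succs m x. vals m z y) = vals m z (x+1) + vals m z (x+m+1)"
    using assms by (simp add: s)
  also have "\<dots> = 2^e * inverse z^Suc e + 2^e * inverse z^Suc e"
    by (simp only: A B)
  also have "\<dots> = z * (2^(Suc e) * inverse z^(Suc (Suc e)))" by (simp only: zmul2[OF assms(2)]) simp
  also have "\<dots> = z * vals m z x" by (simp only: C)
  finally show ?thesis .
qed

lemma case_LpB: assumes "m \<ge> 1" "z \<noteq> 0" "6*m+3 < x" "x < 7*m+3"
  shows "(\<Sum>y\<in>succs m x. vals m z y) = z * vals m z x"
proof -
  define e where "e = 7*m+3 - x - 1"
  have s: "succs m x = {x+1, x+1-m}" using assms by (simp add: succs_def)
  have e1: "7*m+3 - (x+1) = e" "7*m+3 - (x+1) + 1 = Suc e" "6*m+3 - (x+1-m) = e" "6*m+3 - (x+1-m) + 1 = Suc e"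
     "7*m+3 - x = Suc e" "7*m+3 - x + 1 = Suc (Suc e)" using assms by (auto simp: e_def)
  have "vals m z (x+1) = 2^(7*m+3 - (x+1)) * inverse z^(7*m+3 - (x+1) + 1)" using assms by (intro vals_LpB) auto
  hence A: "vals m z (x+1) = 2^e * inverse z^Suc e" by (simp only: e1 Suc_eq_plus1)
  have "vals m z (x+1-m) = 2^(6*m+3 - (x+1-m)) * inverse z^(6*m+3 - (x+1-m) + 1)" using assms by (intro vals_LpA) auto
  hence B: "vals m z (x+1-m) = 2^e * inverse z^Suc e" by (simp only: e1 Suc_eq_plus1)
  have "vals m z x = 2^(7*m+3 - x) * inverse z^(7*m+3 - x + 1)" using assms by (intro vals_LpB) auto
  hence C: "vals m z x = 2^Suc e * inverse z^Suc (Suc e)" by (simp only: e1 Suc_eq_plus1)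
  have d: "x+1 \<noteq> x+1-m" using assms by auto
  have "(\<Sum>y\<in>succs m x. vals m z y) = vals m z (x+1) + vals m z (x+1-m)"
    using d by (simp add: s)
  also have "\<dots> = 2^e * inverse z^Suc e + 2^e * inverse z^Suc e"
    by (simp only: A B)
  also have "\<dots> = z * (2^(Suc e) * inverse z^(Suc (Suc e)))" by (simp only: zmul2[OF assms(2)]) simp
  also have "\<dots> = z * vals m z x" by (simp only: C)
  finally show ?thesis .
qed

lemma case_back: assumes "m \<ge> 1" "z \<noteq> 0" "x = 6*m+3 \<or> x = 7*m+3 \<or> x = 8*m+4"
  shows "(\<Sum>y\<in>succs m x. vals m z y) = z * vals m z x"
proof -
  have s: "succs m x = {0}" using assms by (auto simp add: succs_def)
  have C: "vals m z x = 1 * inverse z ^ Suc 0"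
    using assms(3)
  proof (elim disjE)
    assume "x = 6*m+3" thus ?thesis using vals_LpA[of m x z] assms by simp
  next
    assume "x = 7*m+3" thus ?thesis using vals_LpB[of m x z] assms by simp
  next
    assume "x = 8*m+4" thus ?thesis using vals_rp[of m x z] assms by simp
  qed
  have "(\<Sum>y\<in>succs m x. vals m z y) = 1" by (simp add: s vals_def)
  also have "\<dots> = z * (1 * inverse z ^ Suc 0)" using assms by simp
  also have "\<dots> = z * vals m z x" by (simp only: C)
  finally show ?thesis .
qed

lemma case_rp: assumes "m \<ge> 1" "z \<noteq> 0" "7*m+3 < x" "x < 8*m+4"
  shows "(\<Sum>y\<in>succs m x. vals m z y) = z * vals m z x"
proof -
  define e where "e = 8*m+4 - x"
  have s: "succs m x = {x+1}" using assms by (simp add: succs_def)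
  have e1: "8*m+5 - (x+1) = e" "8*m+5-x = Suc e" using assms by (auto simp: e_def)
  have "vals m z (x+1) = inverse z^(8*m+5-(x+1))" using assms by (intro vals_rp) auto
  hence A: "vals m z (x+1) = inverse z^e" by (simp only: e1)
  have "vals m z x = inverse z^(8*m+5-x)" using assms by (intro vals_rp) auto
  hence C: "vals m z x = 1 * inverse z^Suc e" by (simp only: e1) simp
  have "(\<Sum>y\<in>succs m x. vals m z y) = vals m z (x+1)" by (simp add: s)
  also have "\<dots> = 1 * inverse z ^ e" by (simp only: A) simp
  also have "\<dots> = z * (1 * inverse z ^ Suc e)" by (simp only: zmul2[OF assms(2)])
  also have "\<dots> = z * vals m z x" by (simp only: C)
  finally show ?thesis .
qed

lemma case_spare: assumes "m \<ge> 1" "x = 8*m+5"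
  shows "(\<Sum>y\<in>succs m x. vals m z y) = z * vals m z x"
  using assms by (simp add: succs_def vals_def)



definition fpol :: "nat \<Rightarrow> int poly" where
  "fpol m = Polynomial.monom 1 (4*m+4) - [:2, 4*2^m, 2*4^m:]"

lemma poly_fpol: "poly (map_poly (of_int :: int \<Rightarrow> 'a :: comm_ring_1) (fpol m)) x
   = x^(4*m+4) - (2 + 4*2^m*x + 2*4^m*x^2)"
  by (simp add: fpol_def hom_distribs poly_monom power2_eq_square algebra_simps)

lemma case_0: assumes m: "m \<ge> 1" and z: "z \<noteq> 0"
  and root: "z^(4*m+4) = 2 + 4*2^m*z + 2*4^m*z^2"
  shows "(\<Sum>y\<in>succs m 0. vals m z y) = z * vals m z 0"
proof -
  define w where "w = inverse z"
  define a :: complex where "a = 2^m"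
  have s: "succs m 0 = {1}" using m by (simp add: succs_def)
  have v1: "vals m z 1 = w^(2*m-1) * (2 * V2 m z^2)" using m by (simp add: vals_S w_def)
  have V: "V2 m z = w^(m+1) * (a + w)" by (simp add: V2_def w_def a_def algebra_simps)
  have V': "V2 m z^2 = w^(2*m+2) * (a + w)^2"
  proof -
    have e: "2*m+2 = (m+1)*2" by simp
    have "(w^(m+1))^2 = w^(2*m+2)" unfolding e by (rule power_mult[symmetric])
    thus ?thesis unfolding V by (simp add: power_mult_distrib)
  qed
  have L: "vals m z 1 = 2 * w^(4*m+1) * (a + w)^2"
  proof -
    have "vals m z 1 = 2 * (w^(2*m-1) * w^(2*m+2)) * (a + w)^2" unfolding v1 V' by (simp add: mult_ac)
    also have "w^(2*m-1) * w^(2*m+2) = w^(4*m+1)" unfolding power_add[symmetric] using m by (simp add: algebra_simps)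
    finally show ?thesis .
  qed
  have wz: "w * z = 1" using z by (simp add: w_def)
  have wzn: "w^n * z^n = 1" for n by (simp add: power_mult_distrib[symmetric] wz)
  have "vals m z 1 * z^(4*m+3) = 2 * (w^(4*m+1) * z^(4*m+1)) * ((a + w) * z)^2"
  proof -
    have e3: "4*m+3 = (4*m+1) + 2" by simp
    have "z^(4*m+3) = z^(4*m+1) * z^2" unfolding e3 by (rule power_add)
    thus ?thesis unfolding L by (simp only: power_mult_distrib mult_ac)
  qed
  also have "\<dots> = 2 * (a*z + 1)^2"
  proof -
    have h1: "w^(4*m+1) * z^(4*m+1) = 1" by (rule wzn)
    have h2: "(a+w)*z = a*z + 1" using wz by (simp add: distrib_right)
    show ?thesis by (simp only: h1 h2) simp
  qed
  also have "\<dots> = z^(4*m+4)" unfolding root a_def by (simp add: power2_eq_square algebra_simps power_mult_distrib[symmetric])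
  also have "\<dots> = z * z^(4*m+3)"
  proof -
    have e4: "4*m+4 = Suc (4*m+3)" by simp
    show ?thesis unfolding e4 by (rule power_Suc)
  qed
  finally have "vals m z 1 * z^(4*m+3) = z * z^(4*m+3)" .
  hence "vals m z 1 = z" using z by simp
  thus ?thesis by (simp add: s vals_def)
qed



definition FF :: "nat \<Rightarrow> real \<Rightarrow> real" where
  "FF m x = x^(4*m+4) - (2 + 4*2^m*x + 2*4^m*x^2)"

lemma FF_at: assumes "a = (2::real)^m"
  shows "FF m (-(s/a)) = (s/a)^(4*m+4) - 2*(s-1)^2"
proof -
  have a0: "a \<noteq> 0" using assms by simp
  have e: "even (4*m+4)" by simp
  have p: "(-(s/a))^(4*m+4) = (s/a)^(4*m+4)" using e by (rule power_minus_even)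
  have four: "(4::real)^m = a^2" using assms by (simp add: power2_eq_square power_mult_distrib[symmetric])
  have "2 + 4*2^m*(-(s/a)) + 2*4^m*(-(s/a))^2 = 2*(s-1)^2"
    using a0 unfolding four assms[symmetric] by (simp add: field_simps power2_eq_square)
  thus ?thesis unfolding FF_def p by simp
qed




lemma eis_core:
  fixes f g h :: "int poly"
  assumes fgh: "f = g * h" and lc: "odd (lead_coeff f)"
    and dg: "degree g < degree f"
    and ev: "\<And>i. i < degree f \<Longrightarrow> even (Polynomial.coeff f i)"
    and g0: "even (Polynomial.coeff g 0)" and h0: "odd (Polynomial.coeff h 0)"
  shows False
proof -
  have f0: "f \<noteq> 0" using lc by auto
  have "lead_coeff f = lead_coeff g * lead_coeff h" using fgh by (simp add: lead_coeff_mult)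
  hence lg: "odd (lead_coeff g)" using lc by auto
  define i where "i = (LEAST i. odd (Polynomial.coeff g i))"
  have oi: "odd (Polynomial.coeff g i)" unfolding i_def by (rule LeastI[of _ "degree g"], rule lg)
  have ile: "i \<le> degree g" unfolding i_def by (rule Least_le, rule lg)
  have below: "\<And>j. j < i \<Longrightarrow> even (Polynomial.coeff g j)" unfolding i_def using not_less_Least by blast
  have "Polynomial.coeff f i = (\<Sum>j\<le>i. Polynomial.coeff g j * Polynomial.coeff h (i - j))" using fgh by (simp add: coeff_mult)
  also have "\<dots> = (\<Sum>j<i. Polynomial.coeff g j * Polynomial.coeff h (i - j)) + Polynomial.coeff g i * Polynomial.coeff h 0"
    by (simp add: lessThan_Suc_atMost[symmetric])
  finally have ci: "Polynomial.coeff f i = (\<Sum>j<i. Polynomial.coeff g j * Polynomial.coeff h (i - j)) + Polynomial.coeff g i * Polynomial.coeff h 0" .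
  have "even (\<Sum>j<i. Polynomial.coeff g j * Polynomial.coeff h (i - j))"
    by (rule dvd_sum) (simp add: below)
  moreover have "odd (Polynomial.coeff g i * Polynomial.coeff h 0)" using oi h0 by simp
  ultimately have "odd (Polynomial.coeff f i)" using ci by simp
  moreover have "even (Polynomial.coeff f i)" using ev ile dg by simp
  ultimately show False by simp
qed

lemma eisenstein2:
  fixes f :: "int poly"
  assumes lc: "lead_coeff f = 1" and deg: "degree f > 0"
    and ev: "\<And>i. i < degree f \<Longrightarrow> even (Polynomial.coeff f i)" and c0: "\<not> 4 dvd Polynomial.coeff f 0"
  shows "irreducible f"
proof (rule irreducibleI)
  show f0: "f \<noteq> 0" using deg by auto
  show "\<not> is_unit f" using deg by (auto simp: is_unit_poly_iff)
  fix g h assume fgh: "f = g * h"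
  have g0: "g \<noteq> 0" and h0: "h \<noteq> 0" using f0 fgh by auto
  have dsum: "degree f = degree g + degree h" using fgh g0 h0 by (simp add: degree_mult_eq)
  have lcgh: "lead_coeff g * lead_coeff h = 1" using fgh lc by (simp add: lead_coeff_mult)
  show "is_unit g \<or> is_unit h"
  proof (cases "degree g = 0 \<or> degree h = 0")
    case True
    then show ?thesis
    proof
      assume "degree g = 0"
      then obtain c where "g = [:c:]" by (metis degree_eq_zeroE)
      moreover have "c dvd 1" using lcgh \<open>g = [:c:]\<close> by (metis dvd_triv_left lead_coeff_pCons(2) pCons_0_0 zero_neq_one mult_zero_left)
      ultimately show ?thesis by (simp add: is_unit_poly_iff)
    next
      assume "degree h = 0"
      then obtain c where "h = [:c:]" by (metis degree_eq_zeroE)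
      moreover have "c dvd 1" using lcgh \<open>h = [:c:]\<close> by (metis dvd_triv_right lead_coeff_pCons(2) pCons_0_0 zero_neq_one mult_zero_right)
      ultimately show ?thesis by (simp add: is_unit_poly_iff)
    qed
  next
    case False
    have c0p: "Polynomial.coeff f 0 = Polynomial.coeff g 0 * Polynomial.coeff h 0" using fgh by (simp add: coeff_mult)
    have "even (Polynomial.coeff f 0)" using ev deg by simp
    hence e: "even (Polynomial.coeff g 0) \<or> even (Polynomial.coeff h 0)" using c0p by auto
    have "\<not> (even (Polynomial.coeff g 0) \<and> even (Polynomial.coeff h 0))"
    proof
      assume "even (Polynomial.coeff g 0) \<and> even (Polynomial.coeff h 0)"
      then obtain a b where "Polynomial.coeff g 0 = 2 * a" "Polynomial.coeff h 0 = 2 * b" by (auto elim!: evenE)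
      hence "Polynomial.coeff f 0 = 4 * (a * b)" using c0p by simp
      thus False using c0 by simp
    qed
    with e have "(even (Polynomial.coeff g 0) \<and> odd (Polynomial.coeff h 0)) \<or> (even (Polynomial.coeff h 0) \<and> odd (Polynomial.coeff g 0))" by auto
    thus ?thesis
    proof
      assume "even (Polynomial.coeff g 0) \<and> odd (Polynomial.coeff h 0)"
      with eis_core[OF fgh _ _ ev] lc False dsum show ?thesis by auto
    next
      assume "even (Polynomial.coeff h 0) \<and> odd (Polynomial.coeff g 0)"
      with eis_core[of f h g, OF _ _ _ ev] fgh lc False dsum show ?thesis by (auto simp: mult.commute)
    qed
  qed
qed



lemma irreducible_common_root_dvd:
  fixes f g :: "int poly" and z :: complex
  assumes irr: "irreducible f" and rf: "poly (map_poly of_int f) z = 0"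
    and rg: "poly (map_poly of_int g) z = 0"
  shows "f dvd g"
proof -
  define h where "h = gcd f g"
  have "h dvd f" unfolding h_def by simp
  then obtain q where fq: "f = h * q" by (auto elim!: dvdE)
  from irreducibleD[OF irr fq] have "is_unit h \<or> is_unit q" .
  thus ?thesis
  proof
    assume "is_unit q"
    hence "f dvd h" using fq by (simp add: mult_unit_dvd_iff)
    also have "h dvd g" unfolding h_def by simp
    finally show ?thesis .
  next
    assume uh: "is_unit h"
    then obtain c where hc: "h = [:c:]" and cu: "is_unit c" by (auto simp: is_unit_poly_iff)
    have c0: "c \<noteq> 0" using cu by auto
    define F :: "rat poly" where "F = of_int_poly f"
    define G :: "rat poly" where "G = of_int_poly g"
    have "gcd F G = Polynomial.smult (inverse (rat_of_int (lead_coeff h))) (of_int_poly h)"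
      unfolding F_def G_def h_def by (rule gcd_rat_to_gcd_int)
    also have "\<dots> = 1" using hc c0 by simp
    finally have gFG: "gcd F G = 1" .
    interpret mp: map_poly_comm_ring_hom "of_rat :: rat \<Rightarrow> complex" ..
    define s where "s = fst (bezout_coefficients F G)"
    define t where "t = snd (bezout_coefficients F G)"
    have bez: "s * F + t * G = 1" unfolding s_def t_def using bezout_coefficients_fst_snd[of F G] gFG by simp
    have "map_poly (of_rat :: rat \<Rightarrow> complex) (s * F + t * G) = 1" using bez by simp
    hence "poly (map_poly (of_rat :: rat \<Rightarrow> complex) (s * F + t * G)) z = 1" by simp
    moreover have "poly (map_poly (of_rat :: rat \<Rightarrow> complex) F) z = 0"
      unfolding F_def using rf by (simp add: map_poly_map_poly o_def)
    moreover have "poly (map_poly (of_rat :: rat \<Rightarrow> complex) G) z = 0"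
      unfolding G_def using rg by (simp add: map_poly_map_poly o_def)
    ultimately show ?thesis by (simp add: mp.hom_mult mp.hom_add)
  qed
qed



definition succmat :: "nat \<Rightarrow> (nat \<Rightarrow> nat set) \<Rightarrow> int mat" where
  "succmat N S = mat N N (\<lambda>(i,j). if j \<in> S i then 1 else 0)"

lemma eig_from_succ:
  fixes S :: "nat \<Rightarrow> nat set" and v :: "nat \<Rightarrow> complex" and N :: nat
  assumes sub: "\<And>i. i < N \<Longrightarrow> S i \<subseteq> {..<N}"
    and eq: "\<And>i. i < N \<Longrightarrow> (\<Sum>j\<in>S i. v j) = z * v i"
    and nz: "kz < N" "v kz \<noteq> 0"
  shows "eigenvalue (map_mat complex_of_int (succmat N S)) z"
proof -
  let ?A = "map_mat complex_of_int (succmat N S)"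
  let ?x = "vec N v"
  have dim: "dim_row ?A = N" "dim_col ?A = N" by (auto simp: succmat_def)
  have "?A *\<^sub>v ?x = z \<cdot>\<^sub>v ?x"
  proof (rule eq_vecI)
    fix i assume "i < dim_vec (z \<cdot>\<^sub>v ?x)"
    hence i: "i < N" by simp
    have "(?A *\<^sub>v ?x) $ i = (\<Sum>j\<in>{0..<N}. (if j \<in> S i then 1 else 0) * v j)"
      using i by (auto simp: succmat_def scalar_prod_def intro!: sum.cong)
    also have "\<dots> = (\<Sum>j\<in>{0..<N}. if j \<in> S i then v j else 0)"
      by (rule sum.cong) auto
    also have "\<dots> = (\<Sum>j\<in>{j\<in>{0..<N}. j \<in> S i}. v j)"
      by (rule sum.inter_filter[symmetric]) simp
    also have "{j\<in>{0..<N}. j \<in> S i} = S i" using sub[OF i] by auto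
    also have "(\<Sum>j\<in>S i. v j) = z * v i" by (rule eq[OF i])
    finally show "(?A *\<^sub>v ?x) $ i = (z \<cdot>\<^sub>v ?x) $ i" using i by simp
  qed (simp add: dim succmat_def)
  moreover have "?x \<noteq> 0\<^sub>v N"
  proof
    assume "?x = 0\<^sub>v N"
    hence "?x $ kz = 0\<^sub>v N $ kz" by simp
    thus False using nz by simp
  qed
  ultimately show ?thesis unfolding eigenvalue_def eigenvector_def using dim
    by (intro exI[of _ ?x]) auto
qed


lemma eig_main: assumes m: "m \<ge> 1" and root: "poly (map_poly complex_of_int (fpol m)) z = 0"
  shows "eigenvalue (map_mat complex_of_int (succmat (8*m+6) (succs m))) z"
proof -
  have r: "z^(4*m+4) = 2 + 4*2^m*z + 2*4^m*z^2" using root unfolding poly_fpol by simp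
  have z: "z \<noteq> 0" proof assume "z = 0" with r have "(0::complex)^(4*m+4) = 2" by simp thus False by (simp add: power_0_left) qed
  show ?thesis
  proof (rule eig_from_succ[where kz = 0])
    fix i assume "i < 8*m+6" thus "succs m i \<subseteq> {..<8*m+6}" by (rule succs_sub[OF m])
  next
    fix i assume i: "i < 8*m+6"
    show "(\<Sum>j\<in>succs m i. vals m z j) = z * vals m z i"
    proof (cases "i \<le> 0")
      case True
      hence "i = 0" using i by linarith
      thus ?thesis using case_0[OF m z r] by simp
    next
      case False note F0 = this
      show ?thesis
    proof (cases "i < 2*m")
      case True
      show ?thesis by (rule case_S[OF m z]) (use i F0 True in linarith)+
    next
      case False note F1 = this
      show ?thesis
    proof (cases "i \<le> 2*m")
      case True
      hence "i = 2*m" using i F0 F1 by linarith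
      thus ?thesis using case_J1[OF m z] by simp
    next
      case False note F2 = this
      show ?thesis
    proof (cases "i < 3*m")
      case True
      show ?thesis by (rule case_LA[OF m z]) (use i F0 F1 F2 True in linarith)+
    next
      case False note F3 = this
      show ?thesis
    proof (cases "i \<le> 3*m")
      case True
      hence "i = 3*m" using i F0 F1 F2 F3 by linarith
      thus ?thesis using case_Lend[OF m z, of i] by simp
    next
      case False note F4 = this
      show ?thesis
    proof (cases "i < 4*m")
      case True
      show ?thesis by (rule case_LB[OF m z]) (use i F0 F1 F2 F3 F4 True in linarith)+
    next
      case False note F5 = this
      show ?thesis
    proof (cases "i \<le> 4*m")
      case True
      hence "i = 4*m" using i F0 F1 F2 F3 F4 F5 by linarith
      thus ?thesis using case_Lend[OF m z, of i] by simp
    next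
      case False note F6 = this
      show ?thesis
    proof (cases "i \<le> 5*m")
      case True
      show ?thesis by (rule case_r[OF m z]) (use i F0 F1 F2 F3 F4 F5 F6 True in linarith)+
    next
      case False note F7 = this
      show ?thesis
    proof (cases "i \<le> 5*m+1")
      case True
      hence "i = 5*m+1" using i F0 F1 F2 F3 F4 F5 F6 F7 by linarith
      thus ?thesis using case_Lend[OF m z, of i] by simp
    next
      case False note F8 = this
      show ?thesis
    proof (cases "i \<le> 5*m+2")
      case True
      hence "i = 5*m+2" using i F0 F1 F2 F3 F4 F5 F6 F7 F8 by linarith
      thus ?thesis using case_J2[OF m z, of i] by simp
    next
      case False note F9 = this
      show ?thesis
    proof (cases "i \<le> 5*m+3")
      case True
      hence "i = 5*m+3" using i F0 F1 F2 F3 F4 F5 F6 F7 F8 F9 by linarith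
      thus ?thesis using case_J2[OF m z, of i] by simp
    next
      case False note F10 = this
      show ?thesis
    proof (cases "i < 6*m+3")
      case True
      show ?thesis by (rule case_LpA[OF m z]) (use i F0 F1 F2 F3 F4 F5 F6 F7 F8 F9 F10 True in linarith)+
    next
      case False note F11 = this
      show ?thesis
    proof (cases "i \<le> 6*m+3")
      case True
      hence "i = 6*m+3" using i F0 F1 F2 F3 F4 F5 F6 F7 F8 F9 F10 F11 by linarith
      thus ?thesis using case_back[OF m z, of i] by simp
    next
      case False note F12 = this
      show ?thesis
    proof (cases "i < 7*m+3")
      case True
      show ?thesis by (rule case_LpB[OF m z]) (use i F0 F1 F2 F3 F4 F5 F6 F7 F8 F9 F10 F11 F12 True in linarith)+
    next
      case False note F13 = this
      show ?thesis
    proof (cases "i \<le> 7*m+3")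
      case True
      hence "i = 7*m+3" using i F0 F1 F2 F3 F4 F5 F6 F7 F8 F9 F10 F11 F12 F13 by linarith
      thus ?thesis using case_back[OF m z, of i] by simp
    next
      case False note F14 = this
      show ?thesis
    proof (cases "i < 8*m+4")
      case True
      show ?thesis by (rule case_rp[OF m z]) (use i F0 F1 F2 F3 F4 F5 F6 F7 F8 F9 F10 F11 F12 F13 F14 True in linarith)+
    next
      case False note F15 = this
      show ?thesis
    proof (cases "i \<le> 8*m+4")
      case True
      hence "i = 8*m+4" using i F0 F1 F2 F3 F4 F5 F6 F7 F8 F9 F10 F11 F12 F13 F14 F15 by linarith
      thus ?thesis using case_back[OF m z, of i] by simp
    next
      case False note F16 = this
      hence "i = 8*m+5" using i F0 F1 F2 F3 F4 F5 F6 F7 F8 F9 F10 F11 F12 F13 F14 F15 F16 by linarith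
      thus ?thesis by (rule case_spare[OF m])
    qed
    qed
    qed
    qed
    qed
    qed
    qed
    qed
    qed
    qed
    qed
    qed
    qed
    qed
    qed
    qed
    qed
  next
  qed (simp_all add: vals_def)
qed



lemma FF_cont: "continuous_on S (FF m)"
  unfolding FF_def by (intro continuous_intros)

lemma FF_isCont: "isCont (FF m) x"
  unfolding FF_def by (intro continuous_intros)

lemma two_roots:
  fixes p1 p2 p3 :: real
  assumes "p1 < p2" "p2 < p3" "FF m p1 < 0" "FF m p2 > 0" "FF m p3 < 0"
  shows "\<exists>x y. x < y \<and> FF m x = 0 \<and> FF m y = 0 \<and> y - x < p3 - p1"
proof -
  obtain x where x: "x \<ge> p1" "x \<le> p2" "FF m x = 0"
    using IVT'[of "FF m" p1 0 p2] assms FF_cont by force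
  obtain y where y: "y \<ge> p2" "y \<le> p3" "FF m y = 0"
    using IVT2[of "FF m" p3 0 p2] assms FF_isCont by force
  have "x \<noteq> p2" "y \<noteq> p2" "x \<noteq> p1" "y \<noteq> p3" using x y assms by auto
  hence "x < y" "y - x < p3 - p1" using x y by linarith+
  thus ?thesis using x y by blast
qed

lemma roots_big:
  fixes m k :: nat
  assumes mk: "m = Suc k"
  shows "\<exists>x y. x < y \<and> FF m x = 0 \<and> FF m y = 0 \<and> y - x \<le> (1/2)^(k*(k+3))"
proof -
  define a :: real where "a = 2^m"
  define t :: real where "t = (1/2)^(k*(2*k+4))"
  have a: "a = 2 * 2^k" using mk by (simp add: a_def)
  have a0: "a > 0" by (simp add: a_def)
  have t0: "0 < t" "t \<le> 1" by (auto simp: t_def power_le_one)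
  have d: "4*m+4 = 4*k+8" using mk by simp
  have key: "(2/a)^(4*m+4) = t^2"
  proof -
    have "2/a = (1/2)^k" using a by (simp add: power_one_over)
    hence "(2/a)^(4*m+4) = (1/2)^(k*(4*k+8))" unfolding d by (simp add: power_mult[symmetric])
    also have "k*(4*k+8) = (k*(2*k+4))*2" by simp
    also have "(1/2::real)^((k*(2*k+4))*2) = t^2" unfolding t_def by (rule power_mult)
    finally show ?thesis .
  qed
  have bnd: "(s/a)^(4*m+4) \<le> t^2" if "0 \<le> s" "s \<le> 2" for s
  proof -
    have "(s/a)^(4*m+4) \<le> (2/a)^(4*m+4)"
      using that a0 by (intro power_mono divide_right_mono) auto
    thus ?thesis using key by simp
  qed
  have tt: "0 < t^2" using t0 by simp
  have g1: "FF m (-((1+t)/a)) = ((1+t)/a)^(4*m+4) - 2*t^2" using FF_at[OF a_def, of "1+t"] by simp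
  have g3: "FF m (-((1-t)/a)) = ((1-t)/a)^(4*m+4) - 2*t^2" using FF_at[OF a_def, of "1-t"] by (simp add: power2_commute)
  have f1: "FF m (-((1+t)/a)) < 0"
    using g1 bnd[of "1+t"] t0 tt by linarith
  have f3: "FF m (-((1-t)/a)) < 0"
    using g3 bnd[of "1-t"] t0 tt by linarith
  have f2: "FF m (-(1/a)) > 0"
    using FF_at[OF a_def, of 1] a0 by simp
  have o1: "-((1+t)/a) < -(1/a)" "-(1/a) < -((1-t)/a)" using t0 a0 by (auto simp: divide_strict_right_mono)
  obtain x y where xy: "x < y" "FF m x = 0" "FF m y = 0" "y - x < -((1-t)/a) - -((1+t)/a)"
    using two_roots[OF o1 f1 f2 f3] by blast
  have "-((1-t)/a) - -((1+t)/a) = 2*t/a" using a0 by (simp add: field_simps)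
  also have "\<dots> = t * (1/2)^k" using a by (simp add: power_one_over)
  also have "\<dots> = (1/2)^(k*(2*k+4) + k)" unfolding t_def by (simp add: power_add)
  also have "\<dots> \<le> (1/2)^(k*(k+3))"
    by (rule power_decreasing) (auto simp: algebra_simps)
  finally show ?thesis using xy by force
qed

lemma roots_small: "\<exists>x y. x < y \<and> FF 0 x = 0 \<and> FF 0 y = 0 \<and> y - x \<le> 4"
proof -
  have "FF 0 (-1) > 0" "FF 0 0 < 0" "FF 0 3 > 0" by (simp_all add: FF_def)
  obtain x where x: "x \<ge> -1" "x \<le> 0" "FF 0 x = 0"
    using IVT2[of "FF 0" 0 0 "-1"] \<open>FF 0 (-1) > 0\<close> \<open>FF 0 0 < 0\<close> FF_isCont by force
  obtain y where y: "y \<ge> 0" "y \<le> 3" "FF 0 y = 0"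
    using IVT'[of "FF 0" 0 0 3] \<open>FF 0 3 > 0\<close> \<open>FF 0 0 < 0\<close> FF_cont by force
  have "x \<noteq> 0" using x \<open>FF 0 0 < 0\<close> by auto
  hence "x < y" using x y by linarith
  thus ?thesis using x y by (intro exI[of _ x] exI[of _ y]) auto
qed


lemma coeff3: "Polynomial.coeff [:a,b,c:] i = (if i = 0 then a else if i = 1 then b else if i = 2 then c else 0)"
  by (simp add: coeff_pCons split: nat.split)

lemma fpol_coeff: "Polynomial.coeff (fpol m) i =
   (if i = 4*m+4 then 1 else 0) - (if i = 0 then 2 else if i = 1 then 4*2^m else if i = 2 then 2*4^m else 0)"
  by (simp only: fpol_def coeff_diff coeff_monom coeff3) simp

lemma fpol_degree: "degree (fpol m) = 4*m+4"
proof (rule antisym)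
  show "degree (fpol m) \<le> 4*m+4" by (rule degree_le) (auto simp: fpol_coeff)
  show "4*m+4 \<le> degree (fpol m)" by (rule le_degree) (simp add: fpol_coeff)
qed

lemma fpol_irr: "irreducible (fpol m)"
proof (rule eisenstein2)
  show "lead_coeff (fpol m) = 1" by (simp add: fpol_degree fpol_coeff)
  show "degree (fpol m) > 0" by (simp add: fpol_degree)
  fix i assume "i < degree (fpol m)"
  thus "even (Polynomial.coeff (fpol m) i)" by (auto simp: fpol_degree fpol_coeff)
next
  show "\<not> 4 dvd Polynomial.coeff (fpol m) 0" by (simp add: fpol_coeff)
qed

lemma poly_fpol_real: "poly (map_poly complex_of_int (fpol m)) (complex_of_real x) = complex_of_real (FF m x)"
  by (simp add: poly_fpol FF_def)



definition succs0 :: "nat \<Rightarrow> nat set" where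
  "succs0 x = (if x = 0 then {1,2,3} else if x = 1 then {2,3} else if x = 2 \<or> x = 3 then {0,4}
     else if x = 4 then {0} else {})"

definition vals0 :: "complex \<Rightarrow> nat \<Rightarrow> complex" where
  "vals0 z x = (if x = 0 then 1 else if x = 1 then 2 * inverse z * (inverse z + inverse z^2)
     else if x = 2 \<or> x = 3 then inverse z + inverse z^2 else if x = 4 then inverse z else 0)"

lemma eig_small: assumes root: "poly (map_poly complex_of_int (fpol 0)) z = 0"
  shows "eigenvalue (map_mat complex_of_int (succmat 6 succs0)) z"
proof -
  have r: "z^4 = 2 + 4*z + 2*z^2" using root unfolding poly_fpol by simp
  have z: "z \<noteq> 0" proof assume "z = 0" with r show False by simp qed
  define w where "w = inverse z"
  have wz: "z * w = 1" using z by (simp add: w_def)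
  have zw2: "z * w^2 = w"
  proof -
    have "z * w^2 = (z * w) * w" by (simp add: power2_eq_square mult_ac)
    thus ?thesis using wz by simp
  qed
  have c1: "z^3 * w = z^2"
  proof -
    have "z^3 * w = z^2 * (z * w)" by (simp add: power3_eq_cube power2_eq_square mult_ac)
    thus ?thesis using wz by simp
  qed
  have c2: "z^3 * w^2 = z"
  proof -
    have "z^3 * w^2 = z * (z * w) * (z * w)" by (simp add: power3_eq_cube power2_eq_square mult_ac)
    thus ?thesis using wz by simp
  qed
  have c3: "z^3 * w^3 = 1"
  proof -
    have "z^3 * w^3 = (z * w) * (z * w) * (z * w)" by (simp add: power3_eq_cube mult_ac)
    thus ?thesis using wz by simp
  qed
  have row0: "2 * w * (w + w^2) + 2 * (w + w^2) = z"
  proof -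
    have "2 * w * (w + w^2) + 2 * (w + w^2) = 2 * w + 4 * w^2 + 2 * w^3"
      by (simp add: algebra_simps power2_eq_square power3_eq_cube)
    hence "z^3 * (2 * w * (w + w^2) + 2 * (w + w^2)) = 2 * (z^3 * w) + 4 * (z^3 * w^2) + 2 * (z^3 * w^3)"
      by (simp add: algebra_simps)
    also have "\<dots> = 2 + 4*z + 2*z^2" unfolding c1 c2 c3 by simp
    also have "\<dots> = z^3 * z" using r by (simp add: power3_eq_cube power4_eq_xxxx mult_ac)
    finally show ?thesis using z by simp
  qed
  have v: "vals0 z 0 = 1" "vals0 z 1 = 2 * w * (w + w^2)" "vals0 z 2 = w + w^2" "vals0 z 3 = w + w^2"
    "vals0 z 4 = w" "vals0 z 5 = 0" "vals0 z (Suc 0) = 2 * w * (w + w^2)" by (simp_all add: vals0_def w_def)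
  have s: "succs0 0 = {1,2,3}" "succs0 1 = {2,3}" "succs0 2 = {0,4}" "succs0 3 = {0,4}" "succs0 4 = {0}"
    "succs0 5 = {}" "succs0 (Suc 0) = {2,3}" by (simp_all add: succs0_def)
  show ?thesis
  proof (rule eig_from_succ[where kz = 0])
    fix i :: nat assume "i < 6" thus "succs0 i \<subseteq> {..<6}" by (auto simp: succs0_def)
  next
    fix i :: nat assume i: "i < 6"
    hence "i = 0 \<or> i = 1 \<or> i = 2 \<or> i = 3 \<or> i = 4 \<or> i = 5" by auto
    thus "(\<Sum>j\<in>succs0 i. vals0 z j) = z * vals0 z i"
    proof (elim disjE)
      assume "i = 0" thus ?thesis using row0 by (simp add: s v)
    next
      assume "i = 1"
      have "z * (2 * w * (w + w^2)) = 2 * (z * w) * (w + w^2)" by (simp only: mult_ac)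
      thus ?thesis using \<open>i = 1\<close> by (simp add: s v wz)
    next
      assume "i = 2"
      have "z * (w + w^2) = 1 + w" by (simp add: distrib_left wz zw2)
      thus ?thesis using \<open>i = 2\<close> by (simp add: s v)
    next
      assume "i = 3"
      have "z * (w + w^2) = 1 + w" by (simp add: distrib_left wz zw2)
      thus ?thesis using \<open>i = 3\<close> by (simp add: s v)
    next
      assume "i = 4" thus ?thesis by (simp add: s v wz)
    next
      assume "i = 5" thus ?thesis by (simp add: s v)
    qed
  qed (simp_all add: vals0_def)
qed


lemma pack:
  fixes B :: "int mat" and f :: "int poly" and x y :: real
  assumes B: "B \<in> carrier_mat N N" and ent: "\<forall>i<N. \<forall>j<N. B $$ (i,j) \<in> {0,1}"
    and irr: "irreducible f" and deg: "degree f = D"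
    and ev: "\<And>z. poly (map_poly complex_of_int f) z = 0 \<Longrightarrow> eigenvalue (map_mat complex_of_int B) z"
    and xy: "x < y" and rx: "poly (map_poly complex_of_int f) (of_real x) = 0"
    and ry: "poly (map_poly complex_of_int f) (of_real y) = 0" and bd: "y - x \<le> bndr"
  shows "\<exists>(B :: int mat) (lam :: complex) (mu :: complex) (f :: int poly).
           B \<in> carrier_mat N N \<and>
           (\<forall>i < N. \<forall>j < N. B $$ (i, j) \<in> {0, 1}) \<and>
           eigenvalue (map_mat complex_of_int B) lam \<and>
           eigenvalue (map_mat complex_of_int B) mu \<and>
           lam \<noteq> mu \<and>
           cmod (lam - mu) \<le> bndr \<and>
           f dvd char_poly B \<and> irreducible f \<and> degree f = D \<and>
           poly (map_poly complex_of_int f) lam = 0 \<and>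
           poly (map_poly complex_of_int f) mu = 0"
proof (intro exI conjI)
  show "B \<in> carrier_mat N N" by (rule B)
  show "\<forall>i < N. \<forall>j < N. B $$ (i, j) \<in> {0, 1}" by (rule ent)
  show e1: "eigenvalue (map_mat complex_of_int B) (of_real x)" by (rule ev[OF rx])
  show "eigenvalue (map_mat complex_of_int B) (of_real y)" by (rule ev[OF ry])
  show "complex_of_real x \<noteq> of_real y" using xy by simp
  show "cmod (complex_of_real x - of_real y) \<le> bndr"
    using xy bd by (simp add: of_real_diff[symmetric] del: of_real_diff)
  show "irreducible f" "degree f = D" by (rule irr, rule deg)
  show "poly (map_poly complex_of_int f) (of_real x) = 0" "poly (map_poly complex_of_int f) (of_real y) = 0"
    by (rule rx, rule ry)
  have Bc: "map_mat complex_of_int B \<in> carrier_mat N N" using B by simp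
  have "poly (char_poly (map_mat complex_of_int B)) (of_real x) = 0"
    using e1 eigenvalue_root_char_poly[OF Bc] by simp
  moreover have cp: "char_poly (map_mat complex_of_int B) = map_poly complex_of_int (char_poly B)"
    by (rule of_int_hom.char_poly_hom[OF B])
  ultimately have "poly (map_poly complex_of_int (char_poly B)) (of_real x) = 0"
    by metis
  thus "f dvd char_poly B" by (rule irreducible_common_root_dvd[OF irr rx])
qed


lemma bound_big: assumes "n = 2 * Suc k + 1"
  shows "2 powr (- ((real n + 3) * (real n - 3) / 4)) = (1/2::real)^(k*(k+3))"
proof -
  have e: "(real n + 3) * (real n - 3) / 4 = real (k*(k+3))" using assms by (simp add: algebra_simps)
  have p: "2 powr real (k*(k+3)) = (2::real)^(k*(k+3))" by (rule powr_realpow) simp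
  have "2 powr (- ((real n + 3) * (real n - 3) / 4)) = inverse (2 powr real (k*(k+3)))"
    unfolding e by (rule powr_minus)
  also have "\<dots> = inverse (2^(k*(k+3)))" by (simp only: p)
  also have "\<dots> = (1/2)^(k*(k+3))" by (simp add: power_one_over inverse_eq_divide)
  finally show ?thesis .
qed

lemma bound_small: "2 powr (- ((real (1::nat) + 3) * (real (1::nat) - 3) / 4)) = 4"
proof -
  have "- ((real (1::nat) + 3) * (real (1::nat) - 3) / 4) = real (2::nat)" by simp
  hence "2 powr (- ((real (1::nat) + 3) * (real (1::nat) - 3) / 4)) = 2 powr real (2::nat)" by simp
  also have "\<dots> = 4" by (simp add: powr_realpow)
  finally show ?thesis .
qed

theorem mainTheorem2:
  fixes n :: nat
  assumes "odd n"
  shows "\<exists>(B :: int mat) (lam :: complex) (mu :: complex) (f :: int poly).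
           B \<in> carrier_mat (4 * n + 2) (4 * n + 2) \<and>
           (\<forall>i < 4 * n + 2. \<forall>j < 4 * n + 2. B $$ (i, j) \<in> {0, 1}) \<and>
           eigenvalue (map_mat complex_of_int B) lam \<and>
           eigenvalue (map_mat complex_of_int B) mu \<and>
           lam \<noteq> mu \<and>
           cmod (lam - mu) \<le> 2 powr (- ((real n + 3) * (real n - 3) / 4)) \<and>
           f dvd char_poly B \<and> irreducible f \<and> degree f = 2 * n + 2 \<and>
           poly (map_poly complex_of_int f) lam = 0 \<and>
           poly (map_poly complex_of_int f) mu = 0"
proof -
  obtain m where n: "n = 2*m+1" using assms by (auto elim!: oddE)
  show ?thesis
  proof (cases m)
    case 0
    hence n1: "n = 1" using n by simp
    obtain x y where xy: "x < y" "FF 0 x = 0" "FF 0 y = 0" "y - x \<le> 4" using roots_small by blast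
    show ?thesis unfolding n1 bound_small
    proof (rule pack[where x = x and y = y])
      show "succmat 6 succs0 \<in> carrier_mat (4*1+2) (4*1+2)" by (simp add: succmat_def)
      show "\<forall>i<4*1+2. \<forall>j<4*1+2. succmat 6 succs0 $$ (i, j) \<in> {0, 1}" by (simp add: succmat_def)
      show "irreducible (fpol 0)" by (rule fpol_irr)
      show "degree (fpol 0) = 2*1+2" by (simp add: fpol_degree)
      show "\<And>z. poly (map_poly complex_of_int (fpol 0)) z = 0 \<Longrightarrow>
         eigenvalue (map_mat complex_of_int (succmat 6 succs0)) z" by (rule eig_small)
      show "poly (map_poly complex_of_int (fpol 0)) (complex_of_real x) = 0"
        "poly (map_poly complex_of_int (fpol 0)) (complex_of_real y) = 0"
        using xy by (simp_all add: poly_fpol_real)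
    qed (use xy in auto)
  next
    case (Suc k)
    have N: "4*n+2 = 8*m+6" "2*n+2 = 4*m+4" using n by simp_all
    obtain x y where xy: "x < y" "FF m x = 0" "FF m y = 0" "y - x \<le> (1/2)^(k*(k+3))"
      using roots_big[OF Suc] by blast
    have bd: "2 powr (- ((real n + 3) * (real n - 3) / 4)) = (1/2::real)^(k*(k+3))"
      using n Suc by (intro bound_big) simp
    have m1: "m \<ge> 1" using Suc by simp
    show ?thesis unfolding N bd
    proof (rule pack[where x = x and y = y])
      show "succmat (8*m+6) (succs m) \<in> carrier_mat (8*m+6) (8*m+6)" by (simp add: succmat_def)
      show "\<forall>i<8*m+6. \<forall>j<8*m+6. succmat (8*m+6) (succs m) $$ (i, j) \<in> {0, 1}" by (simp add: succmat_def)
      show "irreducible (fpol m)" by (rule fpol_irr)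
      show "degree (fpol m) = 4*m+4" by (simp add: fpol_degree)
      show "\<And>z. poly (map_poly complex_of_int (fpol m)) z = 0 \<Longrightarrow>
         eigenvalue (map_mat complex_of_int (succmat (8*m+6) (succs m))) z" by (rule eig_main[OF m1])
      show "poly (map_poly complex_of_int (fpol m)) (complex_of_real x) = 0"
        "poly (map_poly complex_of_int (fpol m)) (complex_of_real y) = 0"
        using xy by (simp_all add: poly_fpol_real)
    qed (use xy in auto)
  qed
qed


end
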